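(* Let $\mu$ be a probability measure on $\mathbb{R}^d$, $\nu=\sum_{i=1}^M w_i\delta_{y_i}$ with $w_i>0$, $\sum_iw_i=1$, $w_{\min}=\min_iw_i$, and $c:\mathbb{R}^d\times\mathbb{R}^d\to[0,\infty)$ a cost. Assume the semi-dual objective $H$ admits a minimizer, and let $K$ be a compact set with $\mu(K)\ge1-\frac12 w_{\min}$, with associated projection set $\mathcal C$, and let $\mathbf g^*\in\mathcal C$ be a minimizer of $H$. Run PSGD with step sizes $\gamma_k=\gamma_1/k^{b}$, where $b=1/2$ and $\gamma_1=\mathrm{Diam}(\mathcal C)/(2\sqrt2)$. Then for every $n\ge1$, $$\mathbb{E}\big[H(\bar{\mathbf g}_n)-H(\mathbf g^* )\big]\le \frac{4\sqrt2\,\mathrm{Diam}(\mathcal C)}{\sqrt n}.$$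
   Context: For $\mathbf g\in\mathbb{R}^M$: $\mathbf g^c(x)=\min_i\{c(x,y_i)-g_i\}$; Laguerre cells $\mathbb L_j(\mathbf g)=\{x:\mathbf g^c(x)=c(x,y_j)-g_j\}$; $h(\mathbf g,x)=-\mathbf g^c(x)-\sum_jw_jg_j$; $H(\mathbf g)=\mathbb{E}_{X\sim\mu}[h(\mathbf g,X)]$. Projection set: $\|c\|_{K,\infty}=\sup_{x\in K,j}|c(x,y_j)|$, $\mathcal C=\{\mathbf g\in\mathbb{R}^M:|g_j|\le\|c\|_{K,\infty}\ \forall j\}$, $\mathrm{Proj}_{\mathcal C}$ the Euclidean projection onto $\mathcal C$, and $\mathrm{Diam}(\mathcal C)$ its Euclidean diameter. PSGD: given $\gamma_1>0$, $b$, i.i.d. samples $X_1,X_2,\dots\sim\mu$, start from $\mathbf g_0\in\mathcal C$ and for $k\ge1$ set $\mathbf g_k=\mathrm{Proj}_{\mathcal C}\big(\mathbf g_{k-1}-\gamma_k\,\partial_{\mathbf g}h(\mathbf g_{k-1},X_k)\big)$, $\gamma_k=\gamma_1k^{-b}$, where $\partial_{\mathbf g}h(\mathbf g,x)_j=\mathbf 1_{x\in\mathbb L_j(\mathbf g)}-w_j$ (a point lying in several cells is assigned to one of them by a fixed rule); the averaged iterate is $\bar{\mathbf g}_n=\frac1{n+1}\sum_{k=0}^n\mathbf g_k$. *)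

theory Defs
  imports "HOL-Probability.Probability"
begin

text \<open>Semi-discrete OT. Target points are indexed by a finite type 'm (so M = CARD('m)),
  dual vectors g live in real^'m (Euclidean space R^M).\<close>

definition c_transform :: "('a \<Rightarrow> 'a \<Rightarrow> real) \<Rightarrow> ('m::finite \<Rightarrow> 'a) \<Rightarrow> real^'m \<Rightarrow> 'a \<Rightarrow> real" where
  "c_transform c y g x = Min ((\<lambda>i. c x (y i) - g $ i) ` UNIV)"

definition laguerre_cell :: "('a \<Rightarrow> 'a \<Rightarrow> real) \<Rightarrow> ('m::finite \<Rightarrow> 'a) \<Rightarrow> real^'m \<Rightarrow> 'm \<Rightarrow> 'a set" where
  "laguerre_cell c y g j = {x. c_transform c y g x = c x (y j) - g $ j}"

definition h_fun :: "('a \<Rightarrow> 'a \<Rightarrow> real) \<Rightarrow> ('m::finite \<Rightarrow> 'a) \<Rightarrow> real^'m \<Rightarrow> real^'m \<Rightarrow> 'a \<Rightarrow> real" where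
  "h_fun c y w g x = - c_transform c y g x - (\<Sum>j\<in>UNIV. w $ j * g $ j)"

definition H_fun :: "'a measure \<Rightarrow> ('a \<Rightarrow> 'a \<Rightarrow> real) \<Rightarrow> ('m::finite \<Rightarrow> 'a) \<Rightarrow> real^'m \<Rightarrow> real^'m \<Rightarrow> real" where
  "H_fun mu c y w g = (\<integral>x. h_fun c y w g x \<partial>mu)"

definition cost_sup :: "('a \<Rightarrow> 'a \<Rightarrow> real) \<Rightarrow> ('m::finite \<Rightarrow> 'a) \<Rightarrow> 'a set \<Rightarrow> real" where
  "cost_sup c y K = (SUP p \<in> K \<times> (UNIV::'m set). \<bar>c (fst p) (y (snd p))\<bar>)"

definition proj_set :: "('a \<Rightarrow> 'a \<Rightarrow> real) \<Rightarrow> ('m::finite \<Rightarrow> 'a) \<Rightarrow> 'a set \<Rightarrow> (real^'m) set" where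
  "proj_set c y K = {g. \<forall>j. \<bar>g $ j\<bar> \<le> cost_sup c y K}"

text \<open>Stochastic subgradient; assign g x is the (fixed-rule) chosen cell index of x.\<close>
definition sgrad :: "(real^'m \<Rightarrow> 'a \<Rightarrow> 'm::finite) \<Rightarrow> real^'m \<Rightarrow> real^'m \<Rightarrow> 'a \<Rightarrow> real^'m" where
  "sgrad assign w g x = (\<chi> j. (if assign g x = j then 1 else 0) - w $ j)"

text \<open>PSGD iterates g_k driven by the sample sequence xs (xs k = X_k, k >= 1),
  step gamma_k = gamma1 * k powr (-b).\<close>
primrec psgd :: "(real^'m \<Rightarrow> 'a \<Rightarrow> 'm::finite) \<Rightarrow> real^'m \<Rightarrow> (real^'m) set \<Rightarrow> real^'m
    \<Rightarrow> real \<Rightarrow> real \<Rightarrow> (nat \<Rightarrow> 'a) \<Rightarrow> nat \<Rightarrow> real^'m" where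
  "psgd assign w C g0 gamma1 b xs 0 = g0"
| "psgd assign w C g0 gamma1 b xs (Suc k) =
     closest_point C (psgd assign w C g0 gamma1 b xs k
       - (gamma1 * real (Suc k) powr (- b)) *\<^sub>R sgrad assign w (psgd assign w C g0 gamma1 b xs k) (xs (Suc k)))"

definition psgd_avg :: "(real^'m \<Rightarrow> 'a \<Rightarrow> 'm::finite) \<Rightarrow> real^'m \<Rightarrow> (real^'m) set \<Rightarrow> real^'m
    \<Rightarrow> real \<Rightarrow> real \<Rightarrow> (nat \<Rightarrow> 'a) \<Rightarrow> nat \<Rightarrow> real^'m" where
  "psgd_avg assign w C g0 gamma1 b xs n =
     (1 / real (n + 1)) *\<^sub>R (\<Sum>k\<in>{0..n}. psgd assign w C g0 gamma1 b xs k)"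

end

theory Submission
  imports Defs
begin

lemma sgrad_axis: "sgrad assign w g x = axis (assign g x) 1 - w"
  by (simp add: sgrad_def vec_eq_iff axis_def)

lemma inner_sgrad:
  fixes w v :: "real^'m::finite"
  shows "sgrad assign w g x \<bullet> v = v $ (assign g x) - (\<Sum>j\<in>UNIV. w $ j * v $ j)"
proof -
  have "sgrad assign w g x \<bullet> v = (\<Sum>i\<in>UNIV. ((if assign g x = i then 1 else 0) - w$i) * v$i)"
    by (simp add: sgrad_def inner_vec_def)
  also have "\<dots> = (\<Sum>i\<in>UNIV. (if assign g x = i then v$i else 0)) - (\<Sum>j\<in>UNIV. w $ j * v $ j)"
    by (subst sum_subtractf[symmetric]) (rule sum.cong, auto simp: algebra_simps)
  also have "\<dots> = v $ (assign g x) - (\<Sum>j\<in>UNIV. w $ j * v $ j)" by simp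
  finally show ?thesis .
qed

lemma subgrad_ineq:
  fixes w :: "real^'m::finite"
  assumes cell: "x \<in> laguerre_cell c y g (assign g x)"
  shows "h_fun c y w g' x \<ge> h_fun c y w g x + sgrad assign w g x \<bullet> (g' - g)"
proof -
  let ?j = "assign g x"
  have e: "c_transform c y g x = c x (y ?j) - g $ ?j" using cell by (simp add: laguerre_cell_def)
  have le: "c_transform c y g' x \<le> c x (y ?j) - g' $ ?j"
    unfolding c_transform_def by (rule Min_le) auto
  have s: "(\<Sum>j\<in>UNIV. w $ j * (g' - g) $ j) = (\<Sum>j\<in>UNIV. w $ j * g' $ j) - (\<Sum>j\<in>UNIV. w $ j * g $ j)"
    by (simp add: algebra_simps sum_subtractf)
  show ?thesis unfolding h_fun_def inner_sgrad s using e le by simp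
qed

lemma sgrad_norm2:
  fixes w :: "real^'m::finite"
  assumes w_pos: "\<forall>j. 0 < w $ j" and w_sum: "(\<Sum>j\<in>UNIV. w $ j) = 1"
  shows "norm (sgrad assign w g x) ^ 2 \<le> 2"
proof -
  let ?j = "assign g x"
  have w1: "w $ i \<le> 1" for i
    using member_le_sum[of i UNIV "\<lambda>j. w $ j"] w_pos w_sum by (simp add: less_imp_le)
  have sq: "(\<Sum>i\<in>UNIV. (w $ i)^2) \<le> 1"
  proof -
    have "(\<Sum>i\<in>UNIV. (w $ i)^2) \<le> (\<Sum>i\<in>UNIV. w $ i)"
      by (rule sum_mono) (use w1 w_pos in \<open>simp add: power2_eq_square mult_le_cancel_right1 less_imp_le\<close>)
    then show ?thesis using w_sum by simp
  qed
  have "norm (sgrad assign w g x) ^ 2 = sgrad assign w g x \<bullet> sgrad assign w g x"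
    by (simp add: power2_norm_eq_inner)
  also have "\<dots> = (sgrad assign w g x) $ ?j - (\<Sum>i\<in>UNIV. w $ i * (sgrad assign w g x) $ i)"
    by (rule inner_sgrad)
  also have "\<dots> = (1 - w $ ?j) - (\<Sum>i\<in>UNIV. w $ i * ((if ?j = i then 1 else 0) - w $ i))"
    by (simp add: sgrad_def)
  also have "(\<Sum>i\<in>UNIV. w $ i * ((if ?j = i then 1 else 0) - w $ i)) = w $ ?j - (\<Sum>i\<in>UNIV. (w $ i)^2)"
  proof -
    have "(\<Sum>i\<in>UNIV. w $ i * ((if ?j = i then 1 else 0) - w $ i)) = (\<Sum>i\<in>UNIV. (if ?j = i then w $ i else 0)) - (\<Sum>i\<in>UNIV. (w $ i)^2)"
      by (subst sum_subtractf[symmetric]) (rule sum.cong, auto simp: power2_eq_square algebra_simps)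
    then show ?thesis by simp
  qed
  finally show ?thesis using sq w_pos[rule_format, of ?j] by simp
qed


lemma proj_set_cbox: "proj_set c (y::'m::finite \<Rightarrow> _) K = cbox (- (\<chi> j. cost_sup c y K)) (\<chi> j. cost_sup c y K)"
proof -
  have "(\<forall>j. \<bar>g $ j\<bar> \<le> r) \<longleftrightarrow> (\<forall>j. - r \<le> g $ j \<and> g $ j \<le> r)" for g :: "real^'m::finite" and r
    by (simp add: abs_le_iff) (meson minus_le_iff)
  then show ?thesis by (auto simp: proj_set_def mem_box_cart)
qed

lemma proj_set_props: "closed (proj_set c y K)" "convex (proj_set c y K)" "bounded (proj_set c y K)"
  by (simp_all add: proj_set_cbox closed_cbox convex_box bounded_cbox)

lemma psgd_local:
  assumes "\<forall>i. 1 \<le> i \<and> i \<le> k \<longrightarrow> xs i = xs' i"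
  shows "psgd assign w C g0 gamma1 b xs k = psgd assign w C g0 gamma1 b xs' k"
  using assms by (induction k) auto

lemma psgd_in:
  assumes "closed C" "g0 \<in> C"
  shows "psgd assign w C g0 gamma1 b xs k \<in> C"
  using assms by (cases k) (auto intro!: closest_point_in_set)

lemma abel_bound:
  fixes d t :: "nat \<Rightarrow> real"
  assumes "\<And>k. 0 \<le> d k" "\<And>k. d k \<le> B" "0 \<le> t 0" "\<And>k. t k \<le> t (Suc k)"
  shows "(\<Sum>k<N. (d k - d (Suc k)) * t (Suc k)) \<le> (B - d N) * t N"
proof (induction N)
  case 0 then show ?case using assms by simp
next
  case (Suc N)
  have "(B - d N) * t N \<le> (B - d N) * t (Suc N)"
    using assms by (intro mult_left_mono) auto
  then show ?case using Suc by (simp add: algebra_simps)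
qed

lemma sum_inv_sqrt: "(\<Sum>k<N. 1 / sqrt (real (Suc k))) \<le> 2 * sqrt (real N)"
proof (induction N)
  case 0 then show ?case by simp
next
  case (Suc N)
  have a: "sqrt (real N) < sqrt (real (Suc N))" by simp
  have p: "0 < sqrt (real (Suc N))" by simp
  have "1 / sqrt (real (Suc N)) \<le> 2 * (sqrt (real (Suc N)) - sqrt (real N))"
  proof -
    have "1 = (sqrt (real (Suc N)) - sqrt N) * (sqrt (real (Suc N)) + sqrt N)"
      by (simp add: algebra_simps)
    also have "\<dots> \<le> (sqrt (real (Suc N)) - sqrt N) * (2 * sqrt (real (Suc N)))"
      using a by (intro mult_left_mono) auto
    finally show ?thesis using p by (simp add: field_simps)
  qed
  then show ?case using Suc by simp
qed


lemma sgrad_meas[measurable]: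
  fixes assign :: "real^'m::finite \<Rightarrow> 'a::euclidean_space \<Rightarrow> 'm"
  assumes am: "(\<lambda>p. assign (fst p) (snd p)) \<in> measurable (borel \<Otimes>\<^sub>M borel) (count_space UNIV)"
  shows "(\<lambda>p. sgrad assign w (fst p) (snd p)) \<in> borel_measurable (borel \<Otimes>\<^sub>M borel)"
proof -
  have "(\<lambda>p. sgrad assign w (fst p) (snd p)) = (\<lambda>j. axis j 1 - w) \<circ> (\<lambda>p. assign (fst p) (snd p))"
    by (simp add: fun_eq_iff sgrad_axis)
  also have "\<dots> \<in> borel_measurable (borel \<Otimes>\<^sub>M borel)"
    by (rule measurable_comp[OF am]) simp
  finally show ?thesis .
qed

lemma step_meas:
  fixes assign :: "real^'m::finite \<Rightarrow> 'a::euclidean_space \<Rightarrow> 'm"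
  assumes am: "(\<lambda>p. assign (fst p) (snd p)) \<in> measurable (borel \<Otimes>\<^sub>M borel) (count_space UNIV)"
    and C: "convex C" "closed C" "C \<noteq> {}"
  shows "(\<lambda>p. closest_point C (fst p - r *\<^sub>R sgrad assign w (fst p) (snd p))) \<in> borel_measurable (borel \<Otimes>\<^sub>M borel)"
proof -
  have cp: "closest_point C \<in> borel_measurable borel"
    by (rule borel_measurable_continuous_onI[OF continuous_on_closest_point[OF C]])
  have "(\<lambda>p. fst p - r *\<^sub>R sgrad assign w (fst p) (snd p)) \<in> borel_measurable (borel \<Otimes>\<^sub>M borel)"
    using sgrad_meas[OF am] by measurable
  then show ?thesis by (rule measurable_compose) (rule cp)
qed

lemma psgd_meas_Pi:
  fixes assign :: "real^'m::finite \<Rightarrow> 'a::euclidean_space \<Rightarrow> 'm"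
  assumes am: "(\<lambda>p. assign (fst p) (snd p)) \<in> measurable (borel \<Otimes>\<^sub>M borel) (count_space UNIV)"
    and C: "convex C" "closed C" "C \<noteq> {}"
  shows "k \<le> j \<Longrightarrow> (\<lambda>xs. psgd assign w C g0 gamma1 b xs k) \<in> borel_measurable (PiM {1..j} (\<lambda>_. (borel :: 'a measure)))"
proof (induction k)
  case 0 then show ?case by simp
next
  case (Suc k)
  have IH: "(\<lambda>xs. psgd assign w C g0 gamma1 b xs k) \<in> borel_measurable (PiM {1..j} (\<lambda>_. (borel :: 'a measure)))"
    using Suc by simp
  have comp: "(\<lambda>xs. xs (Suc k)) \<in> measurable (PiM {1..j} (\<lambda>_. (borel :: 'a measure))) borel"
    using Suc.prems by (intro measurable_component_singleton) auto
  have pr: "(\<lambda>xs. (psgd assign w C g0 gamma1 b xs k, xs (Suc k))) \<in> measurable (PiM {1..j} (\<lambda>_. (borel :: 'a measure))) (borel \<Otimes>\<^sub>M borel)"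
    using IH comp by (rule measurable_Pair)
  show ?case
    using measurable_compose[OF pr step_meas[OF am C, of "gamma1 * real (Suc k) powr - b" w]]
    by simp
qed


lemma exp_indep:
  fixes f :: "'b::topological_space \<times> 'c::topological_space \<Rightarrow> real"
    and U V :: "'w \<Rightarrow> 'd" and F :: "'d \<Rightarrow> 'b" and Gm :: "'d \<Rightarrow> 'c" and mu :: "'c measure"
  assumes P: "prob_space P" and mu: "prob_space mu"
    and ind: "prob_space.indep_var P S U T V"
    and F: "F \<in> measurable S borel" and Gm: "Gm \<in> measurable T borel"
    and dZ: "distr P borel (\<lambda>\<omega>. Gm (V \<omega>)) = mu"
    and f: "f \<in> borel_measurable (borel \<Otimes>\<^sub>M borel)"
    and bd: "\<And>p. \<bar>f p\<bar> \<le> B"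
  shows "prob_space.expectation P (\<lambda>\<omega>. f (F (U \<omega>), Gm (V \<omega>))) = prob_space.expectation P (\<lambda>\<omega>. \<integral>x. f (F (U \<omega>), x) \<partial>mu)"
proof -
  interpret P: prob_space P by (rule P)
  interpret M: prob_space mu by (rule mu)
  have rv: "U \<in> measurable P S" "V \<in> measurable P T"
    and joint: "distr P S U \<Otimes>\<^sub>M distr P T V = distr P (S \<Otimes>\<^sub>M T) (\<lambda>x. (U x, V x))"
    using ind unfolding P.indep_var_distribution_eq by auto
  define QU where "QU = distr P S U"
  define QV where "QV = distr P T V"
  interpret QU: prob_space QU unfolding QU_def by (rule P.prob_space_distr[OF rv(1)])
  interpret QV: prob_space QV unfolding QV_def by (rule P.prob_space_distr[OF rv(2)])
  interpret QM: pair_prob_space QU QV ..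
  have smu: "sets mu = sets borel" using dZ[symmetric] by simp
  have sQM: "sets (QU \<Otimes>\<^sub>M QV) = sets (S \<Otimes>\<^sub>M T)"
    by (rule sets_pair_measure_cong) (simp_all add: QU_def QV_def)
  define h where "h p = f (F (fst p), Gm (snd p))" for p
  have hm: "h \<in> borel_measurable (S \<Otimes>\<^sub>M T)"
  proof -
    have "(\<lambda>p. (F (fst p), Gm (snd p))) \<in> measurable (S \<Otimes>\<^sub>M T) (borel \<Otimes>\<^sub>M borel)"
      using F Gm by measurable
    from measurable_compose[OF this f] show ?thesis by (simp add: h_def[abs_def])
  qed
  have hQM: "h \<in> borel_measurable (QU \<Otimes>\<^sub>M QV)"
    using hm by (simp add: measurable_cong_sets[OF sQM refl])
  have int: "integrable (QU \<Otimes>\<^sub>M QV) h"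
    by (rule QM.P.integrable_const_bound[where B=B]) (use bd hQM in \<open>auto simp: h_def\<close>)
  have mY: "(\<lambda>\<omega>. (U \<omega>, V \<omega>)) \<in> measurable P (S \<Otimes>\<^sub>M T)"
    using rv by (intro measurable_Pair) auto
  have "P.expectation (\<lambda>\<omega>. f (F (U \<omega>), Gm (V \<omega>))) = integral\<^sup>L (distr P (S \<Otimes>\<^sub>M T) (\<lambda>x. (U x, V x))) h"
    by (subst integral_distr[OF mY hm]) (simp add: h_def)
  also have "\<dots> = integral\<^sup>L (QU \<Otimes>\<^sub>M QV) h"
    unfolding joint[symmetric] QU_def QV_def ..
  also have "\<dots> = (\<integral>u. (\<integral>v. h (u, v) \<partial>QV) \<partial>QU)"
    by (rule QM.integral_fst'[OF int, symmetric])
  also have "\<dots> = (\<integral>u. (\<integral>x. f (F u, x) \<partial>mu) \<partial>QU)"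
  proof (rule Bochner_Integration.integral_cong[OF refl])
    fix u
    have fm: "(\<lambda>x. f (F u, x)) \<in> borel_measurable borel"
      using f by measurable
    have "(\<integral>v. h (u, v) \<partial>QV) = (\<integral>v. f (F u, Gm v) \<partial>QV)" by (simp add: h_def)
    also have "\<dots> = (\<integral>x. f (F u, x) \<partial>distr QV borel Gm)"
      using Gm by (subst integral_distr[OF _ fm]) (simp_all add: QV_def)
    also have "distr QV borel Gm = mu"
      unfolding QV_def using dZ rv Gm by (subst distr_distr) (simp_all add: comp_def)
    finally show "(\<integral>v. h (u, v) \<partial>QV) = (\<integral>x. f (F u, x) \<partial>mu)" .
  qed
  also have "\<dots> = P.expectation (\<lambda>\<omega>. \<integral>x. f (F (U \<omega>), x) \<partial>mu)"
  proof -
    have m: "(\<lambda>u. \<integral>x. f (F u, x) \<partial>mu) \<in> borel_measurable S"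
    proof -
      have "case_prod (\<lambda>u x. f (F u, x)) \<in> borel_measurable (S \<Otimes>\<^sub>M mu)"
      proof -
        have "(\<lambda>p. (F (fst p), snd p)) \<in> measurable (S \<Otimes>\<^sub>M mu) (borel \<Otimes>\<^sub>M borel)"
          using F by (simp add: measurable_cong_sets[OF sets_pair_measure_cong[OF refl smu] refl])
        from measurable_compose[OF this f] show ?thesis by (simp add: case_prod_beta')
      qed
      then show ?thesis by (rule M.borel_measurable_lebesgue_integral)
    qed
    show ?thesis unfolding QU_def by (rule integral_distr[OF rv(1) m])
  qed
  finally show ?thesis .
qed


lemma norm_step_expand:
  fixes u s :: "'v::real_inner"
  shows "norm (u - r *\<^sub>R s) ^ 2 = norm u ^ 2 - 2 * r * (s \<bullet> u) + r^2 * norm s ^ 2"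
  unfolding power2_norm_eq_inner by (simp add: inner_diff_left inner_diff_right inner_commute algebra_simps power2_eq_square)

lemma telescope:
  fixes gs s :: "nat \<Rightarrow> 'v::real_inner" and gstar :: 'v
  assumes gsC: "\<And>k. gs k \<in> C" and gstarC: "gstar \<in> C"
    and distC: "\<And>a b. a \<in> C \<Longrightarrow> b \<in> C \<Longrightarrow> norm (a - b) \<le> D"
    and D0: "0 \<le> D"
    and sn: "\<And>k. norm (s k) \<le> sqrt 2"
    and step: "\<And>k. norm (gs (Suc k) - gstar) \<le> norm (gs k - (D / (2 * sqrt 2) * real (Suc k) powr - (1/2)) *\<^sub>R s k - gstar)"
  shows "(\<Sum>k<N. s k \<bullet> (gs k - gstar)) \<le> 2 * sqrt 2 * D * sqrt (real N)"
proof (cases "D = 0")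
  case True
  then have "gs k = gstar" for k using distC[OF gsC gstarC, of k] by simp
  then show ?thesis using True by simp
next
  case False
  then have Dp: "0 < D" using D0 by simp
  define gam where "gam = D / (2 * sqrt 2)"
  have gp: "0 < gam" using Dp by (simp add: gam_def)
  define gk where "gk k = gam / sqrt (real (Suc k))" for k
  have gk_eq: "D / (2 * sqrt 2) * real (Suc k) powr - (1/2) = gk k" for k
    by (simp add: gk_def gam_def powr_minus_divide powr_half_sqrt)
  have gkp: "0 < gk k" for k using gp by (simp add: gk_def)
  define d where "d k = norm (gs k - gstar) ^ 2" for k
  define t where "t j = sqrt (real j) / gam" for j
  have d0: "0 \<le> d k" for k by (simp add: d_def)
  have dD: "d k \<le> D^2" for k
    unfolding d_def using distC[OF gsC gstarC, of k] by (intro power_mono) auto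
  have tgk: "t (Suc k) * gk k = 1" for k
    using gp by (simp add: t_def gk_def)
  have each: "s k \<bullet> (gs k - gstar) \<le> (d k - d (Suc k)) * t (Suc k) / 2 + gk k" for k
  proof -
    let ?a = "s k \<bullet> (gs k - gstar)"
    have "d (Suc k) \<le> norm ((gs k - gstar) - gk k *\<^sub>R s k) ^ 2"
    proof -
      have e: "gs k - gk k *\<^sub>R s k - gstar = (gs k - gstar) - gk k *\<^sub>R s k" by (simp add: algebra_simps)
      show ?thesis unfolding d_def using step[of k, unfolded gk_eq e] by (intro power_mono) auto
    qed
    also have "\<dots> = d k - 2 * gk k * ?a + (gk k)^2 * norm (s k) ^ 2"
      by (simp add: norm_step_expand d_def)
    also have "\<dots> \<le> d k - 2 * gk k * ?a + (gk k)^2 * 2"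
    proof -
      have "norm (s k) ^ 2 \<le> 2" using sn[of k] by (metis norm_ge_zero power_mono real_sqrt_pow2 zero_le_numeral)
      then show ?thesis by (intro add_left_mono mult_left_mono) auto
    qed
    finally have "2 * gk k * ?a \<le> d k - d (Suc k) + 2 * (gk k)^2" by simp
    then have "(2 * gk k * ?a) * t (Suc k) \<le> (d k - d (Suc k) + 2 * (gk k)^2) * t (Suc k)"
      using gp by (intro mult_right_mono) (auto simp: t_def)
    then have "2 * ?a * (t (Suc k) * gk k) \<le> (d k - d (Suc k)) * t (Suc k) + 2 * gk k * (t (Suc k) * gk k)"
      by (simp add: algebra_simps power2_eq_square)
    then show ?thesis unfolding tgk by simp
  qed
  have "(\<Sum>k<N. s k \<bullet> (gs k - gstar)) \<le> (\<Sum>k<N. (d k - d (Suc k)) * t (Suc k) / 2 + gk k)"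
    by (rule sum_mono) (rule each)
  also have "\<dots> = (\<Sum>k<N. (d k - d (Suc k)) * t (Suc k)) / 2 + gam * (\<Sum>k<N. 1 / sqrt (real (Suc k)))"
    by (simp add: sum.distrib sum_divide_distrib sum_distrib_left gk_def)
  also have "\<dots> \<le> ((D^2 - d N) * t N) / 2 + gam * (2 * sqrt (real N))"
  proof (intro add_mono divide_right_mono mult_left_mono)
    show "(\<Sum>k<N. (d k - d (Suc k)) * t (Suc k)) \<le> (D^2 - d N) * t N"
      by (rule abel_bound) (use d0 dD gp in \<open>auto simp: t_def intro!: divide_right_mono\<close>)
  qed (use gp sum_inv_sqrt in auto)
  also have "\<dots> \<le> (D^2 * t N) / 2 + gam * (2 * sqrt (real N))"
    using d0[of N] gp by (intro add_right_mono divide_right_mono mult_right_mono) (auto simp: t_def)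
  also have "\<dots> = (3/2) * sqrt 2 * D * sqrt (real N)"
    using Dp by (simp add: t_def gam_def field_simps power2_eq_square)
  also have "\<dots> \<le> 2 * sqrt 2 * D * sqrt (real N)"
    using Dp by (intro mult_right_mono) auto
  finally show ?thesis .
qed


theorem theorem3p2:
  fixes mu :: "'a::euclidean_space measure"
    and c :: "'a \<Rightarrow> 'a \<Rightarrow> real"
    and y :: "'m::finite \<Rightarrow> 'a"
    and w :: "real^'m"
    and K :: "'a set"
    and gstar g0 :: "real^'m"
    and assign :: "real^'m \<Rightarrow> 'a \<Rightarrow> 'm"
    and P :: "'w measure"
    and X :: "nat \<Rightarrow> 'w \<Rightarrow> 'a"
    and n :: nat
  assumes mu_prob: "prob_space mu" and mu_sets: "sets mu = sets borel"
    and w_pos: "\<forall>j. 0 < w $ j" and w_sum: "(\<Sum>j\<in>UNIV. w $ j) = 1"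
    and c_nonneg: "\<forall>x z. 0 \<le> c x z"
    and c_meas: "\<forall>j. (\<lambda>x. c x (y j)) \<in> borel_measurable borel"
    and H_finite: "integrable mu (h_fun c y w gstar)"
    and gstar_min: "\<forall>g. H_fun mu c y w gstar \<le> H_fun mu c y w g"
    and K_compact: "compact K"
    and K_mass: "measure mu K \<ge> 1 - Min (range (($) w)) / 2"
    and c_bdd_K: "bounded ((\<lambda>p. c (fst p) (y (snd p))) ` (K \<times> UNIV))"
    and gstar_C: "gstar \<in> proj_set c y K"
    and g0_C: "g0 \<in> proj_set c y K"
    and assign_cell: "\<forall>g x. x \<in> laguerre_cell c y g (assign g x)"
    and assign_meas: "(\<lambda>p. assign (fst p) (snd p)) \<in> measurable (borel \<Otimes>\<^sub>M borel) (count_space UNIV)"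
    and P_prob: "prob_space P"
    and X_indep: "prob_space.indep_vars P (\<lambda>_. borel) X {1..}"
    and X_distr: "\<forall>k\<ge>1. distr P borel (X k) = mu"
    and n_pos: "n \<ge> 1"
  shows "prob_space.expectation P
           (\<lambda>\<omega>. H_fun mu c y w
                   (psgd_avg assign w (proj_set c y K) g0
                      (diameter (proj_set c y K) / (2 * sqrt 2)) (1/2) (\<lambda>k. X k \<omega>) n)
                 - H_fun mu c y w gstar)
         \<le> 4 * sqrt 2 * diameter (proj_set c y K) / sqrt (real n)"
proof -
  interpret P: prob_space P by (rule P_prob)
  interpret M: prob_space mu by (rule mu_prob)
  define C where "C = proj_set c y K"
  define D where "D = diameter C"
  define gam where "gam = D / (2 * sqrt 2)"
  define G where "G k \<omega> = psgd assign w C g0 gam (1/2) (\<lambda>k. X k \<omega>) k" for k \<omega>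
  define phi where "phi g x = (if g \<in> C then sgrad assign w g x \<bullet> (g - gstar) else 0)" for g x
  define psi where "psi g = (\<integral>x. phi g x \<partial>mu)" for g
  define N where "N = Suc n"
  define HH where "HH = H_fun mu c y w"
  have Ccl: "closed C" and Ccv: "convex C" and Cbd: "bounded C"
    using proj_set_props unfolding C_def by auto
  have Cne: "C \<noteq> {}" using g0_C C_def by auto
  have g0C: "g0 \<in> C" and gsC: "gstar \<in> C" using g0_C gstar_C C_def by auto
  have [measurable]: "C \<in> sets borel" using Ccl by (simp add: borel_closed)
  have D0: "0 \<le> D" unfolding D_def by (rule diameter_ge_0[OF Cbd])
  have distC: "norm (g - g') \<le> D" if "g \<in> C" "g' \<in> C" for g g'
    using diameter_bounded_bound[OF Cbd that] by (simp add: D_def dist_norm)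
  have G_in: "G k \<omega> \<in> C" for k \<omega>
    unfolding G_def by (rule psgd_in[OF Ccl g0C])
  have snorm: "norm (sgrad assign w g x) \<le> sqrt 2" for g x
    by (intro real_le_rsqrt sgrad_norm2[OF w_pos w_sum])
  have phi_bd: "\<bar>phi g x\<bar> \<le> sqrt 2 * D" for g x
  proof (cases "g \<in> C")
    case True
    have "\<bar>sgrad assign w g x \<bullet> (g - gstar)\<bar> \<le> norm (sgrad assign w g x) * norm (g - gstar)"
      by (rule Cauchy_Schwarz_ineq2)
    also have "\<dots> \<le> sqrt 2 * D"
      using snorm distC[OF True gsC] by (intro mult_mono) auto
    finally show ?thesis using True by (simp add: phi_def)
  next
    case False then show ?thesis using D0 by (simp add: phi_def)
  qed
  have sgm[measurable]: "(\<lambda>p. sgrad assign w (fst p) (snd p)) \<in> borel_measurable (borel \<Otimes>\<^sub>M borel)"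
    by (rule sgrad_meas[OF assign_meas])
  have phim: "(\<lambda>p. phi (fst p) (snd p)) \<in> borel_measurable (borel \<Otimes>\<^sub>M borel)"
    unfolding phi_def by measurable
  have Xm: "X k \<in> borel_measurable P" if "k \<ge> 1" for k
    using X_indep that unfolding P.indep_vars_def by auto
  have Fm: "(\<lambda>xs. psgd assign w C g0 gam (1/2) xs k) \<in> borel_measurable (PiM {1..k} (\<lambda>_. (borel :: 'a measure)))" for k
    by (rule psgd_meas_Pi[OF assign_meas Ccv Ccl Cne]) simp
  have G_restr: "G k \<omega> = psgd assign w C g0 gam (1/2) (restrict (\<lambda>i. X i \<omega>) {1..k}) k" for k \<omega>
    unfolding G_def by (rule psgd_local) auto
  have Gm: "G k \<in> borel_measurable P" for k
  proof -
    have "(\<lambda>\<omega>. restrict (\<lambda>i. X i \<omega>) {1..k}) \<in> measurable P (PiM {1..k} (\<lambda>_. (borel :: 'a measure)))"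
      using Xm by (intro measurable_restrict) auto
    from measurable_compose[OF this Fm[of k]] show ?thesis
      by (simp add: G_restr[abs_def])
  qed
  have key: "P.expectation (\<lambda>\<omega>. phi (G k \<omega>) (X (Suc k) \<omega>)) = P.expectation (\<lambda>\<omega>. psi (G k \<omega>))" for k
  proof -
    have ind: "P.indep_var (PiM {1..k} (\<lambda>_. borel)) (\<lambda>\<omega>. restrict (\<lambda>i. X i \<omega>) {1..k})
                 (PiM {Suc k} (\<lambda>_. borel)) (\<lambda>\<omega>. restrict (\<lambda>i. X i \<omega>) {Suc k})"
      by (rule P.indep_var_restrict[OF X_indep]) auto
    have Gm': "(\<lambda>xs. xs (Suc k)) \<in> measurable (PiM {Suc k} (\<lambda>_. (borel :: 'a measure))) borel"
      by (rule measurable_component_singleton) auto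
    have dZ: "distr P borel (\<lambda>\<omega>. restrict (\<lambda>i. X i \<omega>) {Suc k} (Suc k)) = mu"
      using X_distr by simp
    have "P.expectation (\<lambda>\<omega>. (\<lambda>p. phi (fst p) (snd p))
              (psgd assign w C g0 gam (1/2) (restrict (\<lambda>i. X i \<omega>) {1..k}) k, restrict (\<lambda>i. X i \<omega>) {Suc k} (Suc k)))
        = P.expectation (\<lambda>\<omega>. \<integral>x. (\<lambda>p. phi (fst p) (snd p)) (psgd assign w C g0 gam (1/2) (restrict (\<lambda>i. X i \<omega>) {1..k}) k, x) \<partial>mu)"
      apply (rule exp_indep[where B="sqrt 2 * D" and S="PiM {1..k} (\<lambda>_. borel)" and T="PiM {Suc k} (\<lambda>_. borel)"
         and U="\<lambda>\<omega>. restrict (\<lambda>i. X i \<omega>) {1..k}" and V="\<lambda>\<omega>. restrict (\<lambda>i. X i \<omega>) {Suc k}"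
         and F="\<lambda>xs. psgd assign w C g0 gam (1/2) xs k" and Gm="\<lambda>xs. xs (Suc k)"])
      apply (rule P_prob)
      apply (rule mu_prob)
      apply (rule ind)
      apply (rule Fm)
      apply (rule Gm')
      apply (rule dZ)
      apply (rule phim)
      apply (simp add: phi_bd)
      done
    then show ?thesis by (simp add: G_restr psi_def)
  qed
  have cm[measurable]: "(\<lambda>x. c x (y j)) \<in> borel_measurable borel" for j
    using c_meas by auto
  have hb: "h_fun c y w g \<in> borel_measurable borel" for g
    unfolding h_fun_def[abs_def] c_transform_def by measurable
  have hmeas: "h_fun c y w g \<in> borel_measurable mu" for g
    using hb[of g] by (simp add: measurable_cong_sets[OF mu_sets refl])
  have hsub: "h_fun c y w g x - h_fun c y w g' x \<le> sgrad assign w g x \<bullet> (g - g')" for g x g'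
  proof -
    have "h_fun c y w g' x \<ge> h_fun c y w g x + sgrad assign w g x \<bullet> (g' - g)"
      using assign_cell by (intro subgrad_ineq) auto
    moreover have "sgrad assign w g x \<bullet> (g' - g) = - (sgrad assign w g x \<bullet> (g - g'))"
      by (simp add: inner_diff_right)
    ultimately show ?thesis by simp
  qed
  have hdiff: "\<bar>h_fun c y w g x - h_fun c y w gstar x\<bar> \<le> sqrt 2 * norm (g - gstar)" for g x
  proof -
    have a: "\<bar>sgrad assign w g' x \<bullet> (g - gstar)\<bar> \<le> sqrt 2 * norm (g - gstar)" for g'
      using Cauchy_Schwarz_ineq2[of "sgrad assign w g' x" "g - gstar"] snorm[of g' x]
      by (meson mult_right_mono norm_ge_zero order_trans)
    have b: "h_fun c y w gstar x - h_fun c y w g x \<le> sgrad assign w gstar x \<bullet> (gstar - g)"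
      by (rule hsub)
    have "sgrad assign w gstar x \<bullet> (gstar - g) = - (sgrad assign w gstar x \<bullet> (g - gstar))"
      by (simp add: inner_diff_right)
    then show ?thesis using hsub[of g x gstar] a[of g] a[of gstar] b by (simp add: abs_le_iff)
  qed
  have hint: "integrable mu (h_fun c y w g)" for g
  proof -
    have "integrable mu (\<lambda>x. h_fun c y w gstar x + (h_fun c y w g x - h_fun c y w gstar x))"
      by (intro Bochner_Integration.integrable_add H_finite M.integrable_const_bound[where B="sqrt 2 * norm (g - gstar)"])
         (use hdiff hmeas in auto)
    then show ?thesis by simp
  qed
  have phix_m: "phi g \<in> borel_measurable mu" for g
  proof -
    have "(\<lambda>x. (g, x)) \<in> measurable borel (borel \<Otimes>\<^sub>M borel)" by measurable
    from measurable_compose[OF this phim] show ?thesis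
      by (simp add: measurable_cong_sets[OF mu_sets refl])
  qed
  have phix_int: "integrable mu (phi g)" for g
    by (rule M.integrable_const_bound[where B="sqrt 2 * D"]) (use phi_bd phix_m in auto)
  have H_psi: "HH g - HH gstar \<le> psi g" if "g \<in> C" for g
  proof -
    have "HH g - HH gstar = (\<integral>x. h_fun c y w g x - h_fun c y w gstar x \<partial>mu)"
      unfolding HH_def H_fun_def by (rule Bochner_Integration.integral_diff[symmetric]) (rule hint)+
    also have "\<dots> \<le> psi g"
      unfolding psi_def
    proof (rule integral_mono)
      show "integrable mu (\<lambda>x. h_fun c y w g x - h_fun c y w gstar x)" using hint by auto
      show "integrable mu (phi g)" by (rule phix_int)
      fix x show "h_fun c y w g x - h_fun c y w gstar x \<le> phi g x"
        using hsub[of g x gstar] that by (simp add: phi_def)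
    qed
    finally show ?thesis .
  qed
  have H_avg: "real N * HH ((1 / real N) *\<^sub>R (\<Sum>k<N. gs k)) \<le> (\<Sum>k<N. HH (gs k))" for gs :: "nat \<Rightarrow> real^'m"
  proof -
    define a where "a = (1 / real N) *\<^sub>R (\<Sum>k<N. gs k)"
    have sum0: "(\<Sum>k<N. gs k - a) = 0"
    proof -
      have "(\<Sum>k<N. gs k - a) = (\<Sum>k<N. gs k) - real N *\<^sub>R a"
        by (simp add: sum_subtractf sum_constant_scaleR del: sum_constant)
      also have "real N *\<^sub>R a = (\<Sum>k<N. gs k)"
        by (simp add: a_def N_def)
      finally show ?thesis by simp
    qed
    have pt: "real N * h_fun c y w a x \<le> (\<Sum>k<N. h_fun c y w (gs k) x)" for x
    proof -
      have "(\<Sum>k<N. h_fun c y w a x + sgrad assign w a x \<bullet> (gs k - a)) \<le> (\<Sum>k<N. h_fun c y w (gs k) x)"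
        by (rule sum_mono) (use assign_cell in \<open>auto intro: subgrad_ineq\<close>)
      moreover have "(\<Sum>k<N. h_fun c y w a x + sgrad assign w a x \<bullet> (gs k - a)) = real N * h_fun c y w a x"
        by (simp add: sum.distrib inner_sum_right[symmetric] sum0)
      ultimately show ?thesis by simp
    qed
    have "real N * HH a = (\<integral>x. real N * h_fun c y w a x \<partial>mu)"
      by (simp add: HH_def H_fun_def)
    also have "\<dots> \<le> (\<integral>x. (\<Sum>k<N. h_fun c y w (gs k) x) \<partial>mu)"
      by (rule integral_mono) (use hint pt in auto)
    also have "\<dots> = (\<Sum>k<N. HH (gs k))"
      by (subst Bochner_Integration.integral_sum) (use hint in \<open>auto simp: HH_def H_fun_def\<close>)
    finally show ?thesis by (simp add: a_def)
  qed
  have psim: "psi \<in> borel_measurable borel"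
  proof -
    have "case_prod phi \<in> borel_measurable (borel \<Otimes>\<^sub>M mu)"
      using phim by (simp add: measurable_cong_sets[OF sets_pair_measure_cong[OF refl mu_sets] refl] case_prod_beta')
    then show ?thesis unfolding psi_def[abs_def] by (rule M.borel_measurable_lebesgue_integral)
  qed
  have psi_bd: "\<bar>psi g\<bar> \<le> sqrt 2 * D" for g
  proof -
    have "\<bar>psi g\<bar> \<le> (\<integral>x. \<bar>phi g x\<bar> \<partial>mu)" unfolding psi_def by (rule integral_abs_bound)
    also have "\<dots> \<le> (\<integral>x. sqrt 2 * D \<partial>mu)"
      by (rule integral_mono) (use phix_int phi_bd in auto)
    also have "\<dots> = sqrt 2 * D" using M.prob_space by simp
    finally show ?thesis .
  qed
  have psiG_int: "integrable P (\<lambda>\<omega>. psi (G k \<omega>))" for k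
    by (rule P.integrable_const_bound[where B="sqrt 2 * D"])
       (use psi_bd measurable_compose[OF Gm psim] in auto)
  have pk_int: "integrable P (\<lambda>\<omega>. phi (G k \<omega>) (X (Suc k) \<omega>))" for k
  proof -
    have "(\<lambda>\<omega>. (G k \<omega>, X (Suc k) \<omega>)) \<in> measurable P (borel \<Otimes>\<^sub>M borel)"
      using Gm Xm by (intro measurable_Pair) auto
    from measurable_compose[OF this phim]
    show ?thesis by (intro P.integrable_const_bound[where B="sqrt 2 * D"]) (use phi_bd in auto)
  qed
  have avg_eq: "psgd_avg assign w C g0 gam (1/2) (\<lambda>k. X k \<omega>) n = (1 / real N) *\<^sub>R (\<Sum>k<N. G k \<omega>)" for \<omega>
    by (simp add: psgd_avg_def G_def N_def atLeast0AtMost lessThan_Suc_atMost)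
  define f where "f \<omega> = HH (psgd_avg assign w C g0 gam (1/2) (\<lambda>k. X k \<omega>) n) - HH gstar" for \<omega>
  have Npos: "0 < real N" by (simp add: N_def)
  have pw: "f \<omega> \<le> (1 / real N) * (\<Sum>k<N. psi (G k \<omega>))" for \<omega>
  proof -
    have "real N * HH ((1 / real N) *\<^sub>R (\<Sum>k<N. G k \<omega>)) \<le> (\<Sum>k<N. HH (G k \<omega>))"
      by (rule H_avg)
    moreover have "(\<Sum>k<N. HH (G k \<omega>) - HH gstar) \<le> (\<Sum>k<N. psi (G k \<omega>))"
      by (rule sum_mono) (use H_psi G_in in auto)
    ultimately have "real N * f \<omega> \<le> (\<Sum>k<N. psi (G k \<omega>))"
      by (simp add: f_def avg_eq sum_subtractf algebra_simps)
    then show ?thesis using Npos by (simp add: field_simps)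
  qed
  have tel: "(\<Sum>k<N. phi (G k \<omega>) (X (Suc k) \<omega>)) \<le> 2 * sqrt 2 * D * sqrt (real N)" for \<omega>
  proof -
    have "(\<Sum>k<N. phi (G k \<omega>) (X (Suc k) \<omega>)) = (\<Sum>k<N. sgrad assign w (G k \<omega>) (X (Suc k) \<omega>) \<bullet> (G k \<omega> - gstar))"
      using G_in by (simp add: phi_def)
    also have "\<dots> \<le> 2 * sqrt 2 * D * sqrt (real N)"
    proof (rule telescope[where C=C])
      show "G k \<omega> \<in> C" for k by (rule G_in)
      show "gstar \<in> C" by (rule gsC)
      show "norm (a - b) \<le> D" if "a \<in> C" "b \<in> C" for a b using distC that by auto
      show "0 \<le> D" by (rule D0)
      show "norm (sgrad assign w (G k \<omega>) (X (Suc k) \<omega>)) \<le> sqrt 2" for k by (rule snorm)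
      fix k
      let ?z = "G k \<omega> - (D / (2 * sqrt 2) * real (Suc k) powr - (1/2)) *\<^sub>R sgrad assign w (G k \<omega>) (X (Suc k) \<omega>)"
      have "G (Suc k) \<omega> = closest_point C ?z"
        by (simp add: G_def gam_def)
      then have "norm (G (Suc k) \<omega> - gstar) = dist (closest_point C ?z) (closest_point C gstar)"
        by (simp add: closest_point_self[OF gsC] dist_norm)
      also have "\<dots> \<le> dist ?z gstar" by (rule closest_point_lipschitz[OF Ccv Ccl Cne])
      finally show "norm (G (Suc k) \<omega> - gstar) \<le> norm (?z - gstar)" by (simp add: dist_norm)
    qed
    finally show ?thesis .
  qed
  have final: "P.expectation f \<le> 4 * sqrt 2 * D / sqrt (real n)"
  proof (cases "integrable P f")
    case False
    then show ?thesis using D0 by (simp add: not_integrable_integral_eq)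
  next
    case True
    have "P.expectation f \<le> P.expectation (\<lambda>\<omega>. (1 / real N) * (\<Sum>k<N. psi (G k \<omega>)))"
      by (rule integral_mono) (use True psiG_int pw in auto)
    also have "\<dots> = (1 / real N) * (\<Sum>k<N. P.expectation (\<lambda>\<omega>. psi (G k \<omega>)))"
      by (simp add: Bochner_Integration.integral_sum psiG_int)
    also have "\<dots> = (1 / real N) * (\<Sum>k<N. P.expectation (\<lambda>\<omega>. phi (G k \<omega>) (X (Suc k) \<omega>)))"
      by (simp add: key)
    also have "\<dots> = (1 / real N) * P.expectation (\<lambda>\<omega>. \<Sum>k<N. phi (G k \<omega>) (X (Suc k) \<omega>))"
      by (simp add: Bochner_Integration.integral_sum pk_int)
    also have "\<dots> \<le> (1 / real N) * P.expectation (\<lambda>\<omega>. 2 * sqrt 2 * D * sqrt (real N))"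
    proof (rule mult_left_mono)
      show "P.expectation (\<lambda>\<omega>. \<Sum>k<N. phi (G k \<omega>) (X (Suc k) \<omega>)) \<le> P.expectation (\<lambda>\<omega>. 2 * sqrt 2 * D * sqrt (real N))"
      proof (rule integral_mono)
        show "integrable P (\<lambda>\<omega>. \<Sum>k<N. phi (G k \<omega>) (X (Suc k) \<omega>))"
          by (rule Bochner_Integration.integrable_sum) (rule pk_int)
        show "integrable P (\<lambda>\<omega>. 2 * sqrt 2 * D * sqrt (real N))" by simp
        fix \<omega> show "(\<Sum>k<N. phi (G k \<omega>) (X (Suc k) \<omega>)) \<le> 2 * sqrt 2 * D * sqrt (real N)" by (rule tel)
      qed
      show "0 \<le> 1 / real N" by simp
    qed
    also have "\<dots> = 2 * sqrt 2 * D / sqrt (real N)"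
    proof -
      have e: "P.expectation (\<lambda>\<omega>. 2 * sqrt 2 * D * sqrt (real N)) = 2 * sqrt 2 * D * sqrt (real N)"
        using P.prob_space by simp
      have sN: "real N = sqrt (real N) * sqrt (real N)" by simp
      have sp: "0 < sqrt (real N)" using Npos by simp
      show ?thesis unfolding e by (subst sN) (use sp in \<open>simp add: field_simps\<close>)
    qed
    also have "\<dots> \<le> 2 * sqrt 2 * D / sqrt (real n)"
      using n_pos D0 by (intro divide_left_mono mult_nonneg_nonneg) (auto simp: N_def)
    also have "\<dots> \<le> 4 * sqrt 2 * D / sqrt (real n)"
      using D0 by (intro divide_right_mono mult_right_mono) auto
    finally show ?thesis .
  qed
  show ?thesis using final unfolding f_def HH_def gam_def D_def C_def .
qed

end
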